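(* Let $\lambda>0$, $\mu>0$ with $\lambda<\mu+1$. For $\theta>0$ let $$\alpha^*(\theta)=\begin{cases}\mu+\theta(1-\lambda), & \lambda\theta\le 1,\\ \theta+\mu+1-2\sqrt{\lambda\theta}, & \lambda\theta>1,\end{cases}$$ and $V(\theta)=[\alpha^*(\theta)]^2/2$. Let $0<\theta_L<\theta_F$. 1. If $\lambda\le 1$, then $V$ is weakly increasing on $(0,\infty)$, so the firm weakly prefers $\theta_F$ to $\theta_L$. 2. If $\lambda>1$, then $V$ is U-shaped with global minimum at $\theta=\lambda$ (strictly decreasing on $(0,\lambda)$, strictly increasing on $(\lambda,\infty)$), and every maximizer of $V$ over $[\theta_L,\theta_F]$ is an endpoint. Moreover: (a) if $\theta_F\le\lambda$, $V$ is strictly decreasing on $[\theta_L,\theta_F]$ and the firm chooses $\theta_L$ (rejects the upgrade); (b) if $\theta_F>\lambda$, the firm upgrades (chooses $\theta_F$) if and only if $V(\theta_F)>V(\theta_L)$. When in addition $\lambda\theta_L>1$, this is equivalent to $\sqrt{\theta_F}+\sqrt{\theta_L}>2\sqrt{\lambda}$, or equivalently (given $\theta_F>\theta_L$) to $\theta_F>\big[\max\{0,\,2\sqrt{\lambda}-\sqrt{\theta_L}\}\big]^2$. When $\lambda\theta_L\le 1$, $V(\theta_L)=[\mu+\theta_L(1-\lambda)]^2/2$.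
   Context: A firm with profit $\pi(\alpha,d)=(\theta+\mu)\alpha-\alpha^2/2-\frac{\alpha}{\alpha+d}\lambda\alpha\theta-d$ (deployment $\alpha$, security investment $d\ge0$, capability $\theta$, breach-loss magnitude $\lambda$, readiness $\mu$) chooses capability $\theta\in\{\theta_L,\theta_F\}$ (legacy vs. frontier) to maximize firm value $V(\theta)$, where $\alpha^*(\theta)$ is its optimal deployment and $V(\theta)=[\alpha^*(\theta)]^2/2$ is its maximized profit given $\theta$. *)

theory Defs
  imports Complex_Main
begin

definition alpha_star :: "real \<Rightarrow> real \<Rightarrow> real \<Rightarrow> real" where
  "alpha_star lam mu \<theta> =
     (if lam * \<theta> \<le> 1 then mu + \<theta> * (1 - lam)
      else \<theta> + mu + 1 - 2 * sqrt (lam * \<theta>))"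

definition firm_value :: "real \<Rightarrow> real \<Rightarrow> real \<Rightarrow> real" where
  "firm_value lam mu \<theta> = (alpha_star lam mu \<theta>)^2 / 2"

text \<open>The firm upgrades (chooses theta_F over theta_L) when it strictly prefers
  theta_F; ties are resolved in favour of the legacy capability.\<close>
definition upgrades :: "real \<Rightarrow> real \<Rightarrow> real \<Rightarrow> real \<Rightarrow> bool" where
  "upgrades lam mu \<theta>L \<theta>F \<longleftrightarrow> firm_value lam mu \<theta>L < firm_value lam mu \<theta>F"

end

theory Submission
  imports Defs
begin

lemma alpha_alt:
  assumes "0 < x" "0 < lam"
  shows "alpha_star lam mu x = (if lam * x \<le> 1 then mu + x * (1 - lam)
           else (sqrt x - sqrt lam)^2 + mu + 1 - lam)"
proof -
  have "(sqrt x - sqrt lam)^2 = x + lam - 2 * (sqrt lam * sqrt x)"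
    using assms by (simp add: power2_eq_square algebra_simps)
  then show ?thesis unfolding alpha_star_def by (auto simp: algebra_simps real_sqrt_mult)
qed

lemma alpha_pos:
  assumes "0 < x" "0 < lam" "0 < mu" "lam < mu + 1"
  shows "0 < alpha_star lam mu x"
proof (cases "lam * x \<le> 1")
  case True
  show ?thesis
  proof (cases "lam \<le> 1")
    case True
    then have "0 \<le> x * (1 - lam)" using assms by simp
    then show ?thesis using \<open>lam*x\<le>1\<close> assms by (simp add: alpha_star_def)
  next
    case False
    have "x \<le> 1/lam" using True assms by (simp add: field_simps mult.commute)
    hence "x * (lam - 1) \<le> (1/lam) * (lam - 1)" using False by (intro mult_right_mono) auto
    moreover have "(1/lam) * (lam - 1) < mu"
    proof -
      have "mu < mu * lam" using assms False by simp
      hence "lam - 1 < mu * lam" using assms by linarith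
      thus ?thesis using assms by (simp add: field_simps)
    qed
    ultimately show ?thesis using True by (simp add: alpha_star_def algebra_simps)
  qed
next
  case False
  have "0 \<le> (sqrt x - sqrt lam)^2" by simp
  moreover have "alpha_star lam mu x = (sqrt x - sqrt lam)^2 + mu + 1 - lam"
    using alpha_alt[OF assms(1,2), of mu] False by simp
  ultimately show ?thesis using assms by linarith
qed

lemma inv_sq:
  assumes "0 < lam"
  shows "(1 / sqrt lam - sqrt lam)^2 = 1/lam - 2 + lam"
proof -
  have r: "sqrt lam > 0" using assms by simp
  have "(1 / sqrt lam - sqrt lam)^2 = (1/sqrt lam)^2 - 2 * (1/sqrt lam) * sqrt lam + (sqrt lam)^2"
    by (simp add: power2_diff)
  also have "\<dots> = 1/lam - 2 + lam" using r assms by (simp add: power_divide)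
  finally show ?thesis .
qed

lemma sq_lt: "(a::real) < b \<Longrightarrow> 0 \<le> a \<Longrightarrow> a^2 < b^2"
  by (simp add: power_strict_mono)
lemma sq_le: "(a::real) \<le> b \<Longrightarrow> 0 \<le> a \<Longrightarrow> a^2 \<le> b^2"
  by (simp add: power_mono)

lemma br2_sqrt:
  assumes "0 < x" "0 < lam" "1 < lam * x"
  shows "1 / sqrt lam < sqrt x"
proof -
  have "1 < sqrt (lam * x)" using assms by simp
  hence "1 < sqrt lam * sqrt x" by (simp add: real_sqrt_mult)
  thus ?thesis using assms by (simp add: field_simps)
qed

lemma alpha_dec:
  assumes "1 < lam" "0 < mu" "0 < x" "x < y" "y \<le> lam"
  shows "alpha_star lam mu y < alpha_star lam mu x"
proof -
  have l0: "0 < lam" using assms by simp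
  have y0: "0 < y" using assms by simp
  have sxy: "sqrt x < sqrt y" using assms by simp
  have syr: "sqrt y \<le> sqrt lam" using assms by simp
  note ax = alpha_alt[OF assms(3) l0, of mu]
  note ay = alpha_alt[OF y0 l0, of mu]
  show ?thesis
  proof (cases "lam * y \<le> 1")
    case True
    hence "lam * x \<le> 1" using assms by (smt (verit) mult_left_mono)
    have "y * (lam - 1) > x * (lam - 1)" using assms by (intro mult_strict_right_mono) auto
    then show ?thesis using True \<open>lam * x \<le> 1\<close> ax ay by (simp add: algebra_simps)
  next
    case False
    hence ry: "1 / sqrt lam < sqrt y" using br2_sqrt[OF y0 l0] by simp
    show ?thesis
    proof (cases "lam * x \<le> 1")
      case False
      hence "(sqrt lam - sqrt y)^2 < (sqrt lam - sqrt x)^2"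
        using sxy syr by (intro sq_lt) auto
      then show ?thesis using False \<open>\<not> lam * y \<le> 1\<close> ax ay by (simp add: power2_commute)
    next
      case True
      have "x \<le> 1/lam" using True l0 by (simp add: field_simps mult.commute)
      hence "x * (lam - 1) \<le> (1/lam) * (lam - 1)" using assms by (intro mult_right_mono) auto
      moreover have "(1/lam) * (lam - 1) = 1 - 1/lam" using l0 by (simp add: field_simps)
      moreover have "alpha_star lam mu x = mu - x * (lam - 1)" using ax True by (simp add: algebra_simps)
      ultimately have A: "mu + 1/lam - 1 \<le> alpha_star lam mu x" by linarith
      have "(sqrt lam - sqrt y)^2 < (sqrt lam - 1 / sqrt lam)^2"
        using ry syr by (intro sq_lt) auto
      hence "(sqrt y - sqrt lam)^2 < 1/lam - 2 + lam" using inv_sq[OF l0] by (simp add: power2_commute)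
      hence "alpha_star lam mu y < mu + 1/lam - 1" using ay \<open>\<not> lam * y \<le> 1\<close> by simp
      then show ?thesis using A by linarith
    qed
  qed
qed

lemma alpha_inc:
  assumes "1 < lam" "lam \<le> x" "x < y"
  shows "alpha_star lam mu x < alpha_star lam mu y"
proof -
  have l0: "0 < lam" using assms by simp
  have x0: "0 < x" and y0: "0 < y" using assms by simp_all
  have "1 < lam * x" using assms by (smt (verit) mult_less_cancel_left1 l0)
  moreover have "1 < lam * y" using assms by (smt (verit) mult_less_cancel_left1 l0)
  moreover have "(sqrt x - sqrt lam)^2 < (sqrt y - sqrt lam)^2"
    using assms by (intro sq_lt) auto
  ultimately show ?thesis using alpha_alt[OF x0 l0, of mu] alpha_alt[OF y0 l0, of mu] by simp
qed

lemma alpha_weak: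
  assumes "0 < lam" "lam \<le> 1" "0 < x" "x \<le> y"
  shows "alpha_star lam mu x \<le> alpha_star lam mu y"
proof -
  have l0: "0 < lam" using assms by simp
  have y0: "0 < y" using assms by simp
  have sxy: "sqrt x \<le> sqrt y" using assms by simp
  have rr: "sqrt lam \<le> 1 / sqrt lam" using assms by (simp add: field_simps)
  note ax = alpha_alt[OF assms(3) l0, of mu]
  note ay = alpha_alt[OF y0 l0, of mu]
  show ?thesis
  proof (cases "lam * y \<le> 1")
    case True
    hence "lam * x \<le> 1" using assms by (smt (verit) mult_left_mono)
    have "y * (1 - lam) \<ge> x * (1 - lam)" using assms by (intro mult_right_mono) auto
    then show ?thesis using True \<open>lam * x \<le> 1\<close> ax ay by (simp add: algebra_simps)
  next
    case False
    hence ry: "1 / sqrt lam < sqrt y" using br2_sqrt[OF y0 l0] by simp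
    show ?thesis
    proof (cases "lam * x \<le> 1")
      case False
      hence "1 / sqrt lam < sqrt x" using br2_sqrt[OF assms(3) l0] by simp
      hence "(sqrt x - sqrt lam)^2 \<le> (sqrt y - sqrt lam)^2"
        using sxy rr by (intro sq_le) linarith+
      then show ?thesis using False \<open>\<not> lam * y \<le> 1\<close> ax ay by simp
    next
      case True
      have "x \<le> 1/lam" using True l0 by (simp add: field_simps mult.commute)
      hence "x * (1 - lam) \<le> (1/lam) * (1 - lam)" using assms by (intro mult_right_mono) auto
      moreover have "(1/lam) * (1 - lam) = 1/lam - 1" using l0 by (simp add: field_simps)
      moreover have "alpha_star lam mu x = mu + x * (1 - lam)" using ax True by (simp add: algebra_simps)
      ultimately have A: "alpha_star lam mu x \<le> mu + 1/lam - 1" by linarith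
      have "(1 / sqrt lam - sqrt lam)^2 \<le> (sqrt y - sqrt lam)^2"
        using ry rr by (intro sq_le) auto
      hence "1/lam - 2 + lam \<le> (sqrt y - sqrt lam)^2" using inv_sq[OF l0] by simp
      hence "mu + 1/lam - 1 \<le> alpha_star lam mu y" using ay \<open>\<not> lam * y \<le> 1\<close> by simp
      then show ?thesis using A by linarith
    qed
  qed
qed

lemma sq_less_iff: "0 \<le> (a::real) \<Longrightarrow> 0 \<le> b \<Longrightarrow> a^2 < b^2 \<longleftrightarrow> a < b"
  by (metis not_less power_mono_iff zero_less_numeral)

lemma V_lt:
  assumes "0 < x" "0 < y" "0 < lam" "0 < mu" "lam < mu + 1"
  shows "firm_value lam mu x < firm_value lam mu y \<longleftrightarrow> alpha_star lam mu x < alpha_star lam mu y"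
  using alpha_pos[OF assms(1,3,4,5)] alpha_pos[OF assms(2,3,4,5)]
  unfolding firm_value_def by (simp add: sq_less_iff)

lemma V_le:
  assumes "0 < x" "0 < y" "0 < lam" "0 < mu" "lam < mu + 1"
  shows "firm_value lam mu x \<le> firm_value lam mu y \<longleftrightarrow> alpha_star lam mu x \<le> alpha_star lam mu y"
  using V_lt[OF assms(2,1,3,4,5)] by linarith

theorem proposition5:
  fixes lam mu \<theta>L \<theta>F :: real
  defines "V \<equiv> firm_value lam mu"
  assumes lam_pos: "0 < lam" and mu_pos: "0 < mu" and lam_lt: "lam < mu + 1"
    and thL_pos: "0 < \<theta>L" and th_lt: "\<theta>L < \<theta>F"
  shows
    "(lam \<le> 1 \<longrightarrow>
        (\<forall>x y. 0 < x \<longrightarrow> x \<le> y \<longrightarrow> V x \<le> V y) \<and> V \<theta>L \<le> V \<theta>F)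
   \<and> (1 < lam \<longrightarrow>
        (\<forall>x y. 0 < x \<longrightarrow> x < y \<longrightarrow> y < lam \<longrightarrow> V y < V x)
      \<and> (\<forall>x y. lam < x \<longrightarrow> x < y \<longrightarrow> V x < V y)
      \<and> (\<forall>x. 0 < x \<longrightarrow> V lam \<le> V x)
      \<and> (\<forall>\<theta>\<in>{\<theta>L..\<theta>F}. (\<forall>t\<in>{\<theta>L..\<theta>F}. V t \<le> V \<theta>) \<longrightarrow> \<theta> = \<theta>L \<or> \<theta> = \<theta>F)
      \<and> (\<theta>F \<le> lam \<longrightarrow>
          (\<forall>x y. \<theta>L \<le> x \<longrightarrow> x < y \<longrightarrow> y \<le> \<theta>F \<longrightarrow> V y < V x)
          \<and> V \<theta>F < V \<theta>L \<and> \<not> upgrades lam mu \<theta>L \<theta>F)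
      \<and> (lam < \<theta>F \<longrightarrow>
          (upgrades lam mu \<theta>L \<theta>F \<longleftrightarrow> V \<theta>L < V \<theta>F)
          \<and> (1 < lam * \<theta>L \<longrightarrow>
               (V \<theta>L < V \<theta>F \<longleftrightarrow> 2 * sqrt lam < sqrt \<theta>F + sqrt \<theta>L)
             \<and> (V \<theta>L < V \<theta>F \<longleftrightarrow> (max 0 (2 * sqrt lam - sqrt \<theta>L))^2 < \<theta>F))
          \<and> (lam * \<theta>L \<le> 1 \<longrightarrow> V \<theta>L = (mu + \<theta>L * (1 - lam))^2 / 2)))"
proof -
  note Vlt = V_lt[OF _ _ lam_pos mu_pos lam_lt, folded V_def]
  note Vle = V_le[OF _ _ lam_pos mu_pos lam_lt, folded V_def]
  have thF_pos: "0 < \<theta>F" using thL_pos th_lt by linarith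
  have P1: "lam \<le> 1 \<longrightarrow>
        (\<forall>x y. 0 < x \<longrightarrow> x \<le> y \<longrightarrow> V x \<le> V y) \<and> V \<theta>L \<le> V \<theta>F"
  proof (intro impI)
    assume l1: "lam \<le> 1"
    have "\<forall>x y. 0 < x \<longrightarrow> x \<le> y \<longrightarrow> V x \<le> V y"
    proof (intro allI impI)
      fix x y :: real assume "0 < x" "x \<le> y"
      then show "V x \<le> V y" using Vle alpha_weak[OF lam_pos l1] by simp
    qed
    then show "(\<forall>x y. 0 < x \<longrightarrow> x \<le> y \<longrightarrow> V x \<le> V y) \<and> V \<theta>L \<le> V \<theta>F"
      using thL_pos th_lt by simp
  qed
  have P2: "1 < lam \<longrightarrow>
        (\<forall>x y. 0 < x \<longrightarrow> x < y \<longrightarrow> y < lam \<longrightarrow> V y < V x)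
      \<and> (\<forall>x y. lam < x \<longrightarrow> x < y \<longrightarrow> V x < V y)
      \<and> (\<forall>x. 0 < x \<longrightarrow> V lam \<le> V x)
      \<and> (\<forall>\<theta>\<in>{\<theta>L..\<theta>F}. (\<forall>t\<in>{\<theta>L..\<theta>F}. V t \<le> V \<theta>) \<longrightarrow> \<theta> = \<theta>L \<or> \<theta> = \<theta>F)
      \<and> (\<theta>F \<le> lam \<longrightarrow>
          (\<forall>x y. \<theta>L \<le> x \<longrightarrow> x < y \<longrightarrow> y \<le> \<theta>F \<longrightarrow> V y < V x)
          \<and> V \<theta>F < V \<theta>L \<and> \<not> upgrades lam mu \<theta>L \<theta>F)
      \<and> (lam < \<theta>F \<longrightarrow>
          (upgrades lam mu \<theta>L \<theta>F \<longleftrightarrow> V \<theta>L < V \<theta>F)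
          \<and> (1 < lam * \<theta>L \<longrightarrow>
               (V \<theta>L < V \<theta>F \<longleftrightarrow> 2 * sqrt lam < sqrt \<theta>F + sqrt \<theta>L)
             \<and> (V \<theta>L < V \<theta>F \<longleftrightarrow> (max 0 (2 * sqrt lam - sqrt \<theta>L))^2 < \<theta>F))
          \<and> (lam * \<theta>L \<le> 1 \<longrightarrow> V \<theta>L = (mu + \<theta>L * (1 - lam))^2 / 2))"
    (is "_ \<longrightarrow> ?R")
  proof (intro impI)
    assume l1: "1 < lam"
    have dec: "V y < V x" if "0 < x" "x < y" "y \<le> lam" for x y
      using Vlt[of y x] that alpha_dec[OF l1 mu_pos, of x y] by simp
    have inc: "V x < V y" if "lam \<le> x" "x < y" for x y
      using Vlt[of x y] that alpha_inc[OF l1, of x y mu] l1 by simp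
    have A: "\<forall>x y. 0 < x \<longrightarrow> x < y \<longrightarrow> y < lam \<longrightarrow> V y < V x"
      using dec by auto
    have B: "\<forall>x y. lam < x \<longrightarrow> x < y \<longrightarrow> V x < V y"
      using inc by auto
    have C: "\<forall>x. 0 < x \<longrightarrow> V lam \<le> V x"
    proof (intro allI impI)
      fix x :: real assume "0 < x"
      consider "x < lam" | "x = lam" | "lam < x" by linarith
      then show "V lam \<le> V x"
        using dec[of x lam] inc[of lam x] \<open>0 < x\<close> by (cases; auto)
    qed
    have D: "\<forall>\<theta>\<in>{\<theta>L..\<theta>F}. (\<forall>t\<in>{\<theta>L..\<theta>F}. V t \<le> V \<theta>) \<longrightarrow> \<theta> = \<theta>L \<or> \<theta> = \<theta>F"
    proof (intro ballI impI)
      fix \<theta> assume th: "\<theta> \<in> {\<theta>L..\<theta>F}" and mx: "\<forall>t\<in>{\<theta>L..\<theta>F}. V t \<le> V \<theta>"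
      show "\<theta> = \<theta>L \<or> \<theta> = \<theta>F"
      proof (rule ccontr)
        assume "\<not> (\<theta> = \<theta>L \<or> \<theta> = \<theta>F)"
        hence i: "\<theta>L < \<theta>" "\<theta> < \<theta>F" using th by auto
        have "V \<theta>L \<le> V \<theta>" "V \<theta>F \<le> V \<theta>" using mx th_lt by auto
        moreover have "V \<theta> < V \<theta>L \<or> V \<theta> < V \<theta>F"
        proof (cases "\<theta> \<le> lam")
          case True then show ?thesis using dec[of \<theta>L \<theta>] i thL_pos by simp
        next
          case False then show ?thesis using inc[of \<theta> \<theta>F] i by simp
        qed
        ultimately show False by linarith
      qed
    qed
    have E: "\<theta>F \<le> lam \<longrightarrow>
          (\<forall>x y. \<theta>L \<le> x \<longrightarrow> x < y \<longrightarrow> y \<le> \<theta>F \<longrightarrow> V y < V x)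
          \<and> V \<theta>F < V \<theta>L \<and> \<not> upgrades lam mu \<theta>L \<theta>F"
      using dec thL_pos th_lt unfolding upgrades_def V_def[symmetric]
      by (smt (verit))
    have F: "lam < \<theta>F \<longrightarrow>
          (upgrades lam mu \<theta>L \<theta>F \<longleftrightarrow> V \<theta>L < V \<theta>F)
          \<and> (1 < lam * \<theta>L \<longrightarrow>
               (V \<theta>L < V \<theta>F \<longleftrightarrow> 2 * sqrt lam < sqrt \<theta>F + sqrt \<theta>L)
             \<and> (V \<theta>L < V \<theta>F \<longleftrightarrow> (max 0 (2 * sqrt lam - sqrt \<theta>L))^2 < \<theta>F))
          \<and> (lam * \<theta>L \<le> 1 \<longrightarrow> V \<theta>L = (mu + \<theta>L * (1 - lam))^2 / 2)"
    proof (intro impI conjI)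
      assume lF: "lam < \<theta>F"
      show "upgrades lam mu \<theta>L \<theta>F \<longleftrightarrow> V \<theta>L < V \<theta>F"
        unfolding upgrades_def V_def ..
      show "V \<theta>L = (mu + \<theta>L * (1 - lam))^2 / 2" if "lam * \<theta>L \<le> 1"
        using that unfolding V_def firm_value_def alpha_star_def by simp
      assume b: "1 < lam * \<theta>L"
      have bF: "1 < lam * \<theta>F" using b th_lt lam_pos
        by (smt (verit) mult_strict_left_mono)
      define r where "r = sqrt lam"
      define sL where "sL = sqrt \<theta>L"
      define sF where "sF = sqrt \<theta>F"
      have sLF: "sL < sF" unfolding sL_def sF_def using th_lt by simp
      have rF: "r < sF" unfolding r_def sF_def using lF by simp
      have sF0: "0 < sF" unfolding sF_def using thF_pos by simp
      have key: "V \<theta>L < V \<theta>F \<longleftrightarrow> (sL - r)^2 < (sF - r)^2"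
        using Vlt[OF thL_pos thF_pos] alpha_alt[OF thL_pos lam_pos, of mu]
          alpha_alt[OF thF_pos lam_pos, of mu] b bF
        unfolding r_def sL_def sF_def by simp
      have "(sF - r)^2 - (sL - r)^2 = (sF - sL) * (sF + sL - 2 * r)"
        by (simp add: power2_eq_square algebra_simps)
      hence k2: "V \<theta>L < V \<theta>F \<longleftrightarrow> 2 * r < sF + sL"
        using key sLF by (smt (verit) zero_less_mult_iff)
      then show "V \<theta>L < V \<theta>F \<longleftrightarrow> 2 * sqrt lam < sqrt \<theta>F + sqrt \<theta>L"
        unfolding r_def sL_def sF_def .
      have "\<theta>F = sF^2" unfolding sF_def using thF_pos by simp
      hence "(max 0 (2 * r - sL))^2 < \<theta>F \<longleftrightarrow> max 0 (2 * r - sL) < sF"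
        using sF0 by (simp add: sq_less_iff)
      also have "\<dots> \<longleftrightarrow> 2 * r < sF + sL" using sF0 by auto
      finally show "V \<theta>L < V \<theta>F \<longleftrightarrow> (max 0 (2 * sqrt lam - sqrt \<theta>L))^2 < \<theta>F"
        using k2 unfolding r_def sL_def sF_def by simp
    qed
    show ?R using A B C D E F by blast
  qed
  show ?thesis using P1 P2 by blast
qed

end
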